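(* Let $I$ be an open interval and $a_1,a_2\in I$ with $\cosh(a_1-a_2)\cos(a_1-a_2)\neq1$. Put $d:=a_1-a_2$, $C:=\cosh d$, $c:=\cos d$, $S:=\sinh d$, $s:=\sin d$, and $K:=2-2Cc$. Then for all $f\in\mathscr{C}^4(I)$ and $x\in I$, \[ \begin{aligned} K f(x)&=\Big(f(a_1)+\tfrac12\int_{a_1}^x(f^{(4)}-f)(t)\big(\sinh(a_1-t)-\sin(a_1-t)\big)dt\Big)\Big[(C-c)\big(\cosh(x-a_2)-\cos(x-a_2)\big)-(S+s)\big(\sinh(x-a_2)-\sin(x-a_2)\big)\Big]\\ &\quad+\Big(f'(a_1)+\tfrac12\int_{a_1}^x(f^{(4)}-f)(t)\big(\cosh(a_1-t)-\cos(a_1-t)\big)dt\Big)\Big[(C-c)\big(\sinh(x-a_2)-\sin(x-a_2)\big)-(S-s)\big(\cosh(x-a_2)-\cos(x-a_2)\big)\Big]\\ &\quad+\Big(f(a_2)+\tfrac12\int_{a_2}^x(f^{(4)}-f)(t)\big(\sinh(a_2-t)-\sin(a_2-t)\big)dt\Big)\Big[(C-c)\big(\cosh(x-a_1)-\cos(x-a_1)\big)+(S+s)\big(\sinh(x-a_1)-\sin(x-a_1)\big)\Big]\\ &\quad+\Big(f'(a_2)+\tfrac12\int_{a_2}^x(f^{(4)}-f)(t)\big(\cosh(a_2-t)-\cos(a_2-t)\big)dt\Big)\Big[(C-c)\big(\sinh(x-a_1)-\sin(x-a_1)\big)+(S-s)\big(\cosh(x-a_1)-\cos(x-a_1)\big)\Big].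 \end{aligned} \]
   Context: $\mathscr{C}^4(I)$ denotes the space of four times continuously differentiable complex-valued functions on $I$. *)

theory Defs
  imports "HOL-Analysis.Analysis"
begin

fun nderiv :: "nat \<Rightarrow> (real \<Rightarrow> complex) \<Rightarrow> real \<Rightarrow> complex" where
  "nderiv 0 f = f"
| "nderiv (Suc k) f = (\<lambda>x. vector_derivative (nderiv k f) (at x))"

definition Cn :: "nat \<Rightarrow> real set \<Rightarrow> (real \<Rightarrow> complex) set" where
  "Cn n I = {f. (\<forall>k<n. \<forall>x\<in>I. nderiv k f differentiable (at x))
                 \<and> (\<forall>k\<le>n. continuous_on I (nderiv k f))}"

definition oint :: "real \<Rightarrow> real \<Rightarrow> (real \<Rightarrow> complex) \<Rightarrow> complex" where
  "oint a b g = (if a \<le> b then integral {a..b} g else - integral {b..a} g)"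

end

theory Submission
  imports Defs
begin

lemma ftc_oint:
  fixes E h :: "real \<Rightarrow> complex"
  assumes "\<And>t. t \<in> closed_segment a b \<Longrightarrow> (E has_vector_derivative h t) (at t)"
  shows "oint a b h = E b - E a"
proof (cases "a \<le> b")
  case True
  have "(h has_integral (E b - E a)) {a..b}"
    apply (rule fundamental_theorem_of_calculus[OF True])
    using assms True by (auto simp: closed_segment_eq_real_ivl intro: has_vector_derivative_at_within)
  then show ?thesis using True by (simp add: oint_def integral_unique)
next
  case False
  then have ba: "b \<le> a" by simp
  have "(h has_integral (E a - E b)) {b..a}"
    apply (rule fundamental_theorem_of_calculus[OF ba])
    using assms False by (auto simp: closed_segment_eq_real_ivl intro: has_vector_derivative_at_within)
  then show ?thesis using False by (simp add: oint_def integral_unique)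
qed

lemma deriv4:
  fixes f :: "real \<Rightarrow> complex" and k0 k1 k2 k3 :: "real \<Rightarrow> real"
  assumes f: "f \<in> Cn 4 I" and t: "t \<in> I"
   and d0: "(k0 has_real_derivative k1 t) (at t)"
   and d1: "(k1 has_real_derivative k2 t) (at t)"
   and d2: "(k2 has_real_derivative k3 t) (at t)"
   and d3: "(k3 has_real_derivative k0 t) (at t)"
  shows "((\<lambda>t. nderiv 3 f t * complex_of_real (k0 t) - nderiv 2 f t * complex_of_real (k1 t)
       + nderiv 1 f t * complex_of_real (k2 t) - f t * complex_of_real (k3 t))
     has_vector_derivative (nderiv 4 f t - f t) * complex_of_real (k0 t)) (at t)"
proof -
  have D: "(nderiv k f has_vector_derivative nderiv (Suc k) f t) (at t)" if "k < 4" for k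
    using f t that unfolding Cn_def by (simp add: vector_derivative_works[symmetric])
  have D0: "(f has_vector_derivative nderiv 1 f t) (at t)" using D[of 0] by simp
  have D1: "(nderiv 1 f has_vector_derivative nderiv 2 f t) (at t)" using D[of 1] by (simp add: numeral_eq_Suc)
  have D2: "(nderiv 2 f has_vector_derivative nderiv 3 f t) (at t)" using D[of 2] by (simp add: numeral_eq_Suc)
  have D3: "(nderiv 3 f has_vector_derivative nderiv 4 f t) (at t)" using D[of 3] by (simp add: numeral_eq_Suc)
  have H: "((\<lambda>t. nderiv 3 f t * complex_of_real (k0 t) - nderiv 2 f t * complex_of_real (k1 t)
       + nderiv 1 f t * complex_of_real (k2 t) - f t * complex_of_real (k3 t))
     has_vector_derivative
       (nderiv 3 f t * complex_of_real (k1 t) + nderiv 4 f t * complex_of_real (k0 t))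
     - (nderiv 2 f t * complex_of_real (k2 t) + nderiv 3 f t * complex_of_real (k1 t))
     + (nderiv 1 f t * complex_of_real (k3 t) + nderiv 2 f t * complex_of_real (k2 t))
     - (f t * complex_of_real (k0 t) + nderiv 1 f t * complex_of_real (k3 t))) (at t)"
    by (intro derivative_intros D0 D1 D2 D3 d0 d1 d2 d3)
  have eq: "(nderiv 3 f t * complex_of_real (k1 t) + nderiv 4 f t * complex_of_real (k0 t))
     - (nderiv 2 f t * complex_of_real (k2 t) + nderiv 3 f t * complex_of_real (k1 t))
     + (nderiv 1 f t * complex_of_real (k3 t) + nderiv 2 f t * complex_of_real (k2 t))
     - (f t * complex_of_real (k0 t) + nderiv 1 f t * complex_of_real (k3 t))
     = (nderiv 4 f t - f t) * complex_of_real (k0 t)"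
    by (simp add: algebra_simps)
  show ?thesis using H unfolding eq .
qed

lemma derivK:
  fixes f :: "real \<Rightarrow> complex"
  assumes f: "f \<in> Cn 4 I" and t: "t \<in> I"
  shows "((\<lambda>t. nderiv 3 f t * complex_of_real (sinh (a-t) - sin (a-t)) - nderiv 2 f t * complex_of_real (- cosh (a-t) + cos (a-t))
       + nderiv 1 f t * complex_of_real (sinh (a-t) + sin (a-t)) - f t * complex_of_real (- cosh (a-t) - cos (a-t)))
     has_vector_derivative (nderiv 4 f t - f t) * complex_of_real (sinh (a-t) - sin (a-t))) (at t)"
  by (rule deriv4[OF f t]; auto intro!: derivative_eq_intros)

lemma derivM:
  fixes f :: "real \<Rightarrow> complex"
  assumes f: "f \<in> Cn 4 I" and t: "t \<in> I"
  shows "((\<lambda>t. nderiv 3 f t * complex_of_real (cosh (a-t) - cos (a-t)) - nderiv 2 f t * complex_of_real (- sinh (a-t) - sin (a-t))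
       + nderiv 1 f t * complex_of_real (cosh (a-t) + cos (a-t)) - f t * complex_of_real (- sinh (a-t) + sin (a-t)))
     has_vector_derivative (nderiv 4 f t - f t) * complex_of_real (cosh (a-t) - cos (a-t))) (at t)"
  by (rule deriv4[OF f t]; auto intro!: derivative_eq_intros)

lemma combine:
  fixes F0 F1 F2 F3 :: complex and K k0 k1 k2 k3 m0 m1 m2 m3 n0 n1 n2 n3 p0 p1 p2 p3 A1 B1 A2 B2 :: real
  assumes e0: "(1/2)*(-k3*A1 - m3*B1 - n3*A2 - p3*B2) = K"
  and e1: "k2*A1 + m2*B1 + n2*A2 + p2*B2 = 0"
  and e2: "k1*A1 + m1*B1 + n1*A2 + p1*B2 = 0"
  and e3: "k0*A1 + m0*B1 + n0*A2 + p0*B2 = 0"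
  shows "complex_of_real K * F0 =
      1/2*(F3 * of_real k0 - F2 * of_real k1 + F1 * of_real k2 - F0 * of_real k3) * of_real A1
    + 1/2*(F3 * of_real m0 - F2 * of_real m1 + F1 * of_real m2 - F0 * of_real m3) * of_real B1
    + 1/2*(F3 * of_real n0 - F2 * of_real n1 + F1 * of_real n2 - F0 * of_real n3) * of_real A2
    + 1/2*(F3 * of_real p0 - F2 * of_real p1 + F1 * of_real p2 - F0 * of_real p3) * of_real B2"
proof -
  have "1/2*(F3 * of_real k0 - F2 * of_real k1 + F1 * of_real k2 - F0 * of_real k3) * of_real A1
    + 1/2*(F3 * of_real m0 - F2 * of_real m1 + F1 * of_real m2 - F0 * of_real m3) * of_real B1
    + 1/2*(F3 * of_real n0 - F2 * of_real n1 + F1 * of_real n2 - F0 * of_real n3) * of_real A2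
    + 1/2*(F3 * of_real p0 - F2 * of_real p1 + F1 * of_real p2 - F0 * of_real p3) * of_real B2
    = F0 * of_real ((1/2)*(-k3*A1 - m3*B1 - n3*A2 - p3*B2))
      + 1/2 * F1 * of_real (k2*A1 + m2*B1 + n2*A2 + p2*B2)
      - 1/2 * F2 * of_real (k1*A1 + m1*B1 + n1*A2 + p1*B2)
      + 1/2 * F3 * of_real (k0*A1 + m0*B1 + n0*A2 + p0*B2)"
    by (simp only: of_real_mult of_real_add of_real_diff of_real_minus of_real_divide of_real_1 of_real_numeral) algebra
  then show ?thesis unfolding e0 e1 e2 e3 by (simp add: mult.commute)
qed

lemma trigKu:
  fixes u v :: real
  shows "(1/2)*(- (- cosh (-v) - cos (-v)) * ((cosh (u-v) - cos (u-v)) * (cosh u - cos u) - (sinh (u-v) + sin (u-v)) * (sinh u - sin u)) - (- sinh (-v) + sin (-v)) * ((cosh (u-v) - cos (u-v)) * (sinh u - sin u) - (sinh (u-v) - sin (u-v)) * (cosh u - cos u)) - (- cosh (-u) - cos (-u)) * ((cosh (u-v) - cos (u-v)) * (cosh v - cos v) + (sinh (u-v) + sin (u-v)) * (sinh v - sin v)) - (- sinh (-u) + sin (-u)) * ((cosh (u-v) - cos (u-v)) * (sinh v - sin v) + (sinh (u-v) - sin (u-v)) * (cosh v - cos v))) = 2 - 2 * cosh (u-v) * cos (u-v)"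
proof -
  have h: "cosh u ^2 - sinh u ^2 = 1" "cosh v ^2 - sinh v ^2 = 1"
     "cos u ^2 + sin u ^2 = 1" "cos v ^2 + sin v ^2 = 1"
    by (simp_all add: cosh_square_eq)
  show ?thesis
    apply (simp only: cosh_minus sinh_minus cos_minus sin_minus cosh_diff sinh_diff cos_diff sin_diff)
    using h by algebra
qed

lemma trigK:
  fixes a1 a2 x :: real
  shows "(1/2)*(- (- cosh (a1-x) - cos (a1-x)) * ((cosh (a1-a2) - cos (a1-a2)) * (cosh (x - a2) - cos (x - a2)) - (sinh (a1-a2) + sin (a1-a2)) * (sinh (x - a2) - sin (x - a2))) - (- sinh (a1-x) + sin (a1-x)) * ((cosh (a1-a2) - cos (a1-a2)) * (sinh (x - a2) - sin (x - a2)) - (sinh (a1-a2) - sin (a1-a2)) * (cosh (x - a2) - cos (x - a2))) - (- cosh (a2-x) - cos (a2-x)) * ((cosh (a1-a2) - cos (a1-a2)) * (cosh (x - a1) - cos (x - a1)) + (sinh (a1-a2) + sin (a1-a2)) * (sinh (x - a1) - sin (x - a1))) - (- sinh (a2-x) + sin (a2-x)) * ((cosh (a1-a2) - cos (a1-a2)) * (sinh (x - a1) - sin (x - a1)) + (sinh (a1-a2) - sin (a1-a2)) * (cosh (x - a1) - cos (x - a1)))) = 2 - 2 * cosh (a1-a2) * cos (a1-a2)"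
proof -
  have r: "a1 - x = -(x-a1)" "a2 - x = -(x-a2)" "a1 - a2 = (x-a2)-(x-a1)" by simp_all
  show ?thesis unfolding r by (rule trigKu)
qed

lemma trig1u:
  fixes u v :: real
  shows "(sinh (-v) + sin (-v)) * ((cosh (u-v) - cos (u-v)) * (cosh u - cos u) - (sinh (u-v) + sin (u-v)) * (sinh u - sin u)) + (cosh (-v) + cos (-v)) * ((cosh (u-v) - cos (u-v)) * (sinh u - sin u) - (sinh (u-v) - sin (u-v)) * (cosh u - cos u)) + (sinh (-u) + sin (-u)) * ((cosh (u-v) - cos (u-v)) * (cosh v - cos v) + (sinh (u-v) + sin (u-v)) * (sinh v - sin v)) + (cosh (-u) + cos (-u)) * ((cosh (u-v) - cos (u-v)) * (sinh v - sin v) + (sinh (u-v) - sin (u-v)) * (cosh v - cos v)) = 0"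
proof -
  have h: "cosh u ^2 - sinh u ^2 = 1" "cosh v ^2 - sinh v ^2 = 1"
     "cos u ^2 + sin u ^2 = 1" "cos v ^2 + sin v ^2 = 1"
    by (simp_all add: cosh_square_eq)
  show ?thesis
    apply (simp only: cosh_minus sinh_minus cos_minus sin_minus cosh_diff sinh_diff cos_diff sin_diff)
    using h by algebra
qed

lemma trig1:
  fixes a1 a2 x :: real
  shows "(sinh (a1-x) + sin (a1-x)) * ((cosh (a1-a2) - cos (a1-a2)) * (cosh (x - a2) - cos (x - a2)) - (sinh (a1-a2) + sin (a1-a2)) * (sinh (x - a2) - sin (x - a2))) + (cosh (a1-x) + cos (a1-x)) * ((cosh (a1-a2) - cos (a1-a2)) * (sinh (x - a2) - sin (x - a2)) - (sinh (a1-a2) - sin (a1-a2)) * (cosh (x - a2) - cos (x - a2))) + (sinh (a2-x) + sin (a2-x)) * ((cosh (a1-a2) - cos (a1-a2)) * (cosh (x - a1) - cos (x - a1)) + (sinh (a1-a2) + sin (a1-a2)) * (sinh (x - a1) - sin (x - a1))) + (cosh (a2-x) + cos (a2-x)) * ((cosh (a1-a2) - cos (a1-a2)) * (sinh (x - a1) - sin (x - a1)) + (sinh (a1-a2) - sin (a1-a2)) * (cosh (x - a1) - cos (x - a1))) = 0"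
proof -
  have r: "a1 - x = -(x-a1)" "a2 - x = -(x-a2)" "a1 - a2 = (x-a2)-(x-a1)" by simp_all
  show ?thesis unfolding r by (rule trig1u)
qed

lemma trig2u:
  fixes u v :: real
  shows "(- cosh (-v) + cos (-v)) * ((cosh (u-v) - cos (u-v)) * (cosh u - cos u) - (sinh (u-v) + sin (u-v)) * (sinh u - sin u)) + (- sinh (-v) - sin (-v)) * ((cosh (u-v) - cos (u-v)) * (sinh u - sin u) - (sinh (u-v) - sin (u-v)) * (cosh u - cos u)) + (- cosh (-u) + cos (-u)) * ((cosh (u-v) - cos (u-v)) * (cosh v - cos v) + (sinh (u-v) + sin (u-v)) * (sinh v - sin v)) + (- sinh (-u) - sin (-u)) * ((cosh (u-v) - cos (u-v)) * (sinh v - sin v) + (sinh (u-v) - sin (u-v)) * (cosh v - cos v)) = 0"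
proof -
  have h: "cosh u ^2 - sinh u ^2 = 1" "cosh v ^2 - sinh v ^2 = 1"
     "cos u ^2 + sin u ^2 = 1" "cos v ^2 + sin v ^2 = 1"
    by (simp_all add: cosh_square_eq)
  show ?thesis
    apply (simp only: cosh_minus sinh_minus cos_minus sin_minus cosh_diff sinh_diff cos_diff sin_diff)
    using h by algebra
qed

lemma trig2:
  fixes a1 a2 x :: real
  shows "(- cosh (a1-x) + cos (a1-x)) * ((cosh (a1-a2) - cos (a1-a2)) * (cosh (x - a2) - cos (x - a2)) - (sinh (a1-a2) + sin (a1-a2)) * (sinh (x - a2) - sin (x - a2))) + (- sinh (a1-x) - sin (a1-x)) * ((cosh (a1-a2) - cos (a1-a2)) * (sinh (x - a2) - sin (x - a2)) - (sinh (a1-a2) - sin (a1-a2)) * (cosh (x - a2) - cos (x - a2))) + (- cosh (a2-x) + cos (a2-x)) * ((cosh (a1-a2) - cos (a1-a2)) * (cosh (x - a1) - cos (x - a1)) + (sinh (a1-a2) + sin (a1-a2)) * (sinh (x - a1) - sin (x - a1))) + (- sinh (a2-x) - sin (a2-x)) * ((cosh (a1-a2) - cos (a1-a2)) * (sinh (x - a1) - sin (x - a1)) + (sinh (a1-a2) - sin (a1-a2)) * (cosh (x - a1) - cos (x - a1))) = 0"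
proof -
  have r: "a1 - x = -(x-a1)" "a2 - x = -(x-a2)" "a1 - a2 = (x-a2)-(x-a1)" by simp_all
  show ?thesis unfolding r by (rule trig2u)
qed

lemma trig3u:
  fixes u v :: real
  shows "(sinh (-v) - sin (-v)) * ((cosh (u-v) - cos (u-v)) * (cosh u - cos u) - (sinh (u-v) + sin (u-v)) * (sinh u - sin u)) + (cosh (-v) - cos (-v)) * ((cosh (u-v) - cos (u-v)) * (sinh u - sin u) - (sinh (u-v) - sin (u-v)) * (cosh u - cos u)) + (sinh (-u) - sin (-u)) * ((cosh (u-v) - cos (u-v)) * (cosh v - cos v) + (sinh (u-v) + sin (u-v)) * (sinh v - sin v)) + (cosh (-u) - cos (-u)) * ((cosh (u-v) - cos (u-v)) * (sinh v - sin v) + (sinh (u-v) - sin (u-v)) * (cosh v - cos v)) = 0"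
proof -
  have h: "cosh u ^2 - sinh u ^2 = 1" "cosh v ^2 - sinh v ^2 = 1"
     "cos u ^2 + sin u ^2 = 1" "cos v ^2 + sin v ^2 = 1"
    by (simp_all add: cosh_square_eq)
  show ?thesis
    apply (simp only: cosh_minus sinh_minus cos_minus sin_minus cosh_diff sinh_diff cos_diff sin_diff)
    by (simp add: algebra_simps)
qed

lemma trig3:
  fixes a1 a2 x :: real
  shows "(sinh (a1-x) - sin (a1-x)) * ((cosh (a1-a2) - cos (a1-a2)) * (cosh (x - a2) - cos (x - a2)) - (sinh (a1-a2) + sin (a1-a2)) * (sinh (x - a2) - sin (x - a2))) + (cosh (a1-x) - cos (a1-x)) * ((cosh (a1-a2) - cos (a1-a2)) * (sinh (x - a2) - sin (x - a2)) - (sinh (a1-a2) - sin (a1-a2)) * (cosh (x - a2) - cos (x - a2))) + (sinh (a2-x) - sin (a2-x)) * ((cosh (a1-a2) - cos (a1-a2)) * (cosh (x - a1) - cos (x - a1)) + (sinh (a1-a2) + sin (a1-a2)) * (sinh (x - a1) - sin (x - a1))) + (cosh (a2-x) - cos (a2-x)) * ((cosh (a1-a2) - cos (a1-a2)) * (sinh (x - a1) - sin (x - a1)) + (sinh (a1-a2) - sin (a1-a2)) * (cosh (x - a1) - cos (x - a1))) = 0"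
proof -
  have r: "a1 - x = -(x-a1)" "a2 - x = -(x-a2)" "a1 - a2 = (x-a2)-(x-a1)" by simp_all
  show ?thesis unfolding r by (rule trig3u)
qed

lemma auxhalf: "(y::complex) + 1/2 * (X - 2 * y) = 1/2 * X"
  by (simp add: algebra_simps)

lemma PK:
  fixes f :: "real \<Rightarrow> complex"
  assumes f: "f \<in> Cn 4 I" and seg: "closed_segment a x \<subseteq> I"
  shows "f a + 1/2 * oint a x (\<lambda>t. (nderiv 4 f t - f t) * complex_of_real (sinh (a - t) - sin (a - t)))
   = 1/2 * (nderiv 3 f x * complex_of_real (sinh (a-x) - sin (a-x)) - nderiv 2 f x * complex_of_real (- cosh (a-x) + cos (a-x))
       + nderiv 1 f x * complex_of_real (sinh (a-x) + sin (a-x)) - f x * complex_of_real (- cosh (a-x) - cos (a-x)))"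
proof -
  have O: "oint a x (\<lambda>t. (nderiv 4 f t - f t) * complex_of_real (sinh (a - t) - sin (a - t)))
    = (nderiv 3 f x * complex_of_real (sinh (a-x) - sin (a-x)) - nderiv 2 f x * complex_of_real (- cosh (a-x) + cos (a-x))
       + nderiv 1 f x * complex_of_real (sinh (a-x) + sin (a-x)) - f x * complex_of_real (- cosh (a-x) - cos (a-x)))
     - (nderiv 3 f a * complex_of_real (sinh (a-a) - sin (a-a)) - nderiv 2 f a * complex_of_real (- cosh (a-a) + cos (a-a))
       + nderiv 1 f a * complex_of_real (sinh (a-a) + sin (a-a)) - f a * complex_of_real (- cosh (a-a) - cos (a-a)))"
    by (rule ftc_oint[where E="\<lambda>t. nderiv 3 f t * complex_of_real (sinh (a-t) - sin (a-t)) - nderiv 2 f t * complex_of_real (- cosh (a-t) + cos (a-t))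
       + nderiv 1 f t * complex_of_real (sinh (a-t) + sin (a-t)) - f t * complex_of_real (- cosh (a-t) - cos (a-t))"])
      (rule derivK[OF f], use seg in blast)
  have EA: "nderiv 3 f a * complex_of_real (sinh (a-a) - sin (a-a)) - nderiv 2 f a * complex_of_real (- cosh (a-a) + cos (a-a))
       + nderiv 1 f a * complex_of_real (sinh (a-a) + sin (a-a)) - f a * complex_of_real (- cosh (a-a) - cos (a-a)) = 2 * f a" by simp
  show ?thesis unfolding O EA by (rule auxhalf)
qed

lemma PM:
  fixes f :: "real \<Rightarrow> complex"
  assumes f: "f \<in> Cn 4 I" and seg: "closed_segment a x \<subseteq> I"
  shows "nderiv 1 f a + 1/2 * oint a x (\<lambda>t. (nderiv 4 f t - f t) * complex_of_real (cosh (a - t) - cos (a - t)))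
   = 1/2 * (nderiv 3 f x * complex_of_real (cosh (a-x) - cos (a-x)) - nderiv 2 f x * complex_of_real (- sinh (a-x) - sin (a-x))
       + nderiv 1 f x * complex_of_real (cosh (a-x) + cos (a-x)) - f x * complex_of_real (- sinh (a-x) + sin (a-x)))"
proof -
  have O: "oint a x (\<lambda>t. (nderiv 4 f t - f t) * complex_of_real (cosh (a - t) - cos (a - t)))
    = (nderiv 3 f x * complex_of_real (cosh (a-x) - cos (a-x)) - nderiv 2 f x * complex_of_real (- sinh (a-x) - sin (a-x))
       + nderiv 1 f x * complex_of_real (cosh (a-x) + cos (a-x)) - f x * complex_of_real (- sinh (a-x) + sin (a-x)))
     - (nderiv 3 f a * complex_of_real (cosh (a-a) - cos (a-a)) - nderiv 2 f a * complex_of_real (- sinh (a-a) - sin (a-a))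
       + nderiv 1 f a * complex_of_real (cosh (a-a) + cos (a-a)) - f a * complex_of_real (- sinh (a-a) + sin (a-a)))"
    by (rule ftc_oint[where E="\<lambda>t. nderiv 3 f t * complex_of_real (cosh (a-t) - cos (a-t)) - nderiv 2 f t * complex_of_real (- sinh (a-t) - sin (a-t))
       + nderiv 1 f t * complex_of_real (cosh (a-t) + cos (a-t)) - f t * complex_of_real (- sinh (a-t) + sin (a-t))"])
      (rule derivM[OF f], use seg in blast)
  have EA: "nderiv 3 f a * complex_of_real (cosh (a-a) - cos (a-a)) - nderiv 2 f a * complex_of_real (- sinh (a-a) - sin (a-a))
       + nderiv 1 f a * complex_of_real (cosh (a-a) + cos (a-a)) - f a * complex_of_real (- sinh (a-a) + sin (a-a)) = 2 * nderiv 1 f a" by simp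
  show ?thesis unfolding O EA by (rule auxhalf)
qed

theorem mainTheorem10:
  fixes I :: "real set" and a1 a2 x :: real and f :: "real \<Rightarrow> complex"
  assumes "open I" and "is_interval I"
    and "a1 \<in> I" and "a2 \<in> I"
    and "cosh (a1 - a2) * cos (a1 - a2) \<noteq> 1"
    and "f \<in> Cn 4 I" and "x \<in> I"
  shows "let d = a1 - a2; C = cosh d; c = cos d; S = sinh d; s = sin d; K = 2 - 2 * C * c;
             g = (\<lambda>t. nderiv 4 f t - f t) in
    complex_of_real K * f x =
      (f a1 + 1/2 * oint a1 x (\<lambda>t. g t * complex_of_real (sinh (a1 - t) - sin (a1 - t))))
        * complex_of_real ((C - c) * (cosh (x - a2) - cos (x - a2)) - (S + s) * (sinh (x - a2) - sin (x - a2)))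
    + (nderiv 1 f a1 + 1/2 * oint a1 x (\<lambda>t. g t * complex_of_real (cosh (a1 - t) - cos (a1 - t))))
        * complex_of_real ((C - c) * (sinh (x - a2) - sin (x - a2)) - (S - s) * (cosh (x - a2) - cos (x - a2)))
    + (f a2 + 1/2 * oint a2 x (\<lambda>t. g t * complex_of_real (sinh (a2 - t) - sin (a2 - t))))
        * complex_of_real ((C - c) * (cosh (x - a1) - cos (x - a1)) + (S + s) * (sinh (x - a1) - sin (x - a1)))
    + (nderiv 1 f a2 + 1/2 * oint a2 x (\<lambda>t. g t * complex_of_real (cosh (a2 - t) - cos (a2 - t))))
        * complex_of_real ((C - c) * (sinh (x - a1) - sin (x - a1)) + (S - s) * (cosh (x - a1) - cos (x - a1)))"
proof -
  have cvx: "convex I" using assms(2) by (simp add: is_interval_convex_1)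
  have s1: "closed_segment a1 x \<subseteq> I" by (rule closed_segment_subset[OF assms(3) assms(7) cvx])
  have s2: "closed_segment a2 x \<subseteq> I" by (rule closed_segment_subset[OF assms(4) assms(7) cvx])
  show ?thesis
    unfolding Let_def PK[OF assms(6) s1] PM[OF assms(6) s1] PK[OF assms(6) s2] PM[OF assms(6) s2]
    by (rule combine[OF trigK trig1 trig2 trig3])
qed

end
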